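(* For each $i\in\{b,1,2\}$, the function $V_{B_i}(p_1,p_2)$ is convex in $p_1$ (for each fixed $p_2\in[0,1]$) and convex in $p_2$ (for each fixed $p_1\in[0,1]$).
   Context: Fix parameters $0\le\lambda_0\le\lambda_1\le 1$, a discount factor $\beta\in[0,1)$, and rates $0<R_l<R_h<2R_l$. Let $\alpha=\lambda_1-\lambda_0$ and $T(p)=\alpha p+\lambda_0$. The model consists of two independent, identical Gilbert–Elliott channels (state 1 = good, 0 = bad) with $\Pr[\text{good}\mid\text{good}]=\lambda_1$ and $\Pr[\text{good}\mid\text{bad}]=\lambda_0$. The belief state is $(p_1,p_2)\in[0,1]^2$, where $p_i$ is the conditional probability that channel $i$ is good in the current slot. There are three actions, $B_b$, $B_1$ and $B_2$. Let $V:[0,1]^2\to\mathbb R$ be the optimal expected total discounted reward, i.e. the unique bounded function satisfying $V=\max\{V_{B_b},V_{B_1},V_{B_2}\}$, where $V_{B_b}(p_1,p_2)=p_1R_l+p_2R_l+\beta[(1-p_1)(1-p_2)V(\lambda_0,\lambda_0)+p_1(1-p_2)V(\lambda_1,\lambda_0)+(1-p_1)p_2V(\lambda_0,\lambda_1)+p_1p_2V(\lambda_1,\lambda_1)]$, $V_{B_1}(p_1,p_2)=p_1R_h+\beta[(1-p_1)V(\lambda_0,T(p_2))+p_1V(\lambda_1,T(p_2))]$, $V_{B_2}(p_1,p_2)=p_2R_h+\beta[(1-p_2)V(T(p_1),\lambda_0)+p_2V(T(p_1),\lambda_1)]$. *)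

theory Defs
  imports "HOL-Analysis.Analysis"
begin

definition Tupd :: "real \<Rightarrow> real \<Rightarrow> real \<Rightarrow> real" where
  "Tupd l0 l1 p = (l1 - l0) * p + l0"

datatype action = Bb | B1 | B2

fun VB :: "real \<Rightarrow> real \<Rightarrow> real \<Rightarrow> real \<Rightarrow> real \<Rightarrow> (real \<Rightarrow> real \<Rightarrow> real)
           \<Rightarrow> action \<Rightarrow> real \<Rightarrow> real \<Rightarrow> real" where
  "VB l0 l1 \<beta> Rl Rh W Bb p1 p2 =
     p1 * Rl + p2 * Rl + \<beta> * ((1 - p1) * (1 - p2) * W l0 l0 + p1 * (1 - p2) * W l1 l0
        + (1 - p1) * p2 * W l0 l1 + p1 * p2 * W l1 l1)"
| "VB l0 l1 \<beta> Rl Rh W B1 p1 p2 =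
     p1 * Rh + \<beta> * ((1 - p1) * W l0 (Tupd l0 l1 p2) + p1 * W l1 (Tupd l0 l1 p2))"
| "VB l0 l1 \<beta> Rl Rh W B2 p1 p2 =
     p2 * Rh + \<beta> * ((1 - p2) * W (Tupd l0 l1 p1) l0 + p2 * W (Tupd l0 l1 p1) l1)"

definition is_optimal_value :: "real \<Rightarrow> real \<Rightarrow> real \<Rightarrow> real \<Rightarrow> real \<Rightarrow> (real \<Rightarrow> real \<Rightarrow> real) \<Rightarrow> bool" where
  "is_optimal_value l0 l1 \<beta> Rl Rh V \<longleftrightarrow>
     (\<exists>M. \<forall>p1\<in>{0..1}. \<forall>p2\<in>{0..1}. \<bar>V p1 p2\<bar> \<le> M) \<and>
     (\<forall>p1\<in>{0..1}. \<forall>p2\<in>{0..1}.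
        V p1 p2 = max (VB l0 l1 \<beta> Rl Rh V Bb p1 p2)
                      (max (VB l0 l1 \<beta> Rl Rh V B1 p1 p2) (VB l0 l1 \<beta> Rl Rh V B2 p1 p2)))"

end

theory Submission
  imports Defs
begin

definition SC :: "(real \<Rightarrow> real \<Rightarrow> real) \<Rightarrow> bool" where
  "SC W \<longleftrightarrow> (\<forall>p\<in>{0..1}. \<forall>x\<in>{0..1}. \<forall>y\<in>{0..1}. \<forall>t\<in>{0..1}.
      W ((1-t)*x+t*y) p \<le> (1-t) * W x p + t * W y p \<and>
      W p ((1-t)*x+t*y) \<le> (1-t) * W p x + t * W p y)"

lemma SC_D1: "SC W \<Longrightarrow> p \<in> {0..1} \<Longrightarrow> x \<in> {0..1} \<Longrightarrow> y \<in> {0..1} \<Longrightarrow> t \<in> {0..1} \<Longrightarrow>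
   W ((1-t)*x+t*y) p \<le> (1-t) * W x p + t * W y p"
  unfolding SC_def by blast

lemma SC_D2: "SC W \<Longrightarrow> p \<in> {0..1} \<Longrightarrow> x \<in> {0..1} \<Longrightarrow> y \<in> {0..1} \<Longrightarrow> t \<in> {0..1} \<Longrightarrow>
   W p ((1-t)*x+t*y) \<le> (1-t) * W p x + t * W p y"
  unfolding SC_def by blast

lemma absD: fixes u v c :: real shows "\<bar>u - v\<bar> \<le> c \<Longrightarrow> u \<le> v + c \<and> v \<le> u + c"
  by (simp add: abs_le_iff)

lemma T_in: "0 \<le> l0 \<Longrightarrow> l0 \<le> l1 \<Longrightarrow> l1 \<le> 1 \<Longrightarrow> x \<in> {0..1::real} \<Longrightarrow> Tupd l0 l1 x \<in> {0..1}"
proof -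
  assume a: "0 \<le> l0" "l0 \<le> l1" "l1 \<le> 1" "x \<in> {0..1::real}"
  have "0 \<le> (l1 - l0) * x" using a by auto
  moreover have "(l1 - l0) * x \<le> (l1 - l0) * 1" using a by (intro mult_left_mono) auto
  ultimately show ?thesis using a by (auto simp: Tupd_def)
qed

lemma T_comb: "Tupd l0 l1 ((1-t)*x+t*y) = (1-t) * Tupd l0 l1 x + t * Tupd l0 l1 y"
  by (simp add: Tupd_def algebra_simps)

lemma comb_mono:
  fixes A B A' B' \<beta> p :: real
  assumes "A \<le> A'" "B \<le> B'" "0 \<le> \<beta>" "0 \<le> p" "p \<le> 1"
  shows "\<beta> * ((1-p)*A + p*B) \<le> \<beta> * ((1-p)*A' + p*B')"
  using assms by (intro mult_left_mono add_mono) auto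

lemma VB_SC:
  assumes "SC W" "0 \<le> l0" "l0 \<le> l1" "l1 \<le> 1" "0 \<le> \<beta>"
  shows "SC (VB l0 l1 \<beta> Rl Rh W a)"
  unfolding SC_def
proof (intro ballI conjI)
  fix p x y t :: real
  assume p: "p \<in> {0..1}" and x: "x \<in> {0..1}" and y: "y \<in> {0..1}" and t: "t \<in> {0..1}"
  let ?z = "(1-t)*x+t*y"
  have Tp: "Tupd l0 l1 p \<in> {0..1}" and Tx: "Tupd l0 l1 x \<in> {0..1}" and Ty: "Tupd l0 l1 y \<in> {0..1}"
    using T_in assms p x y by auto
  have l0i: "l0 \<in> {0..1}" and l1i: "l1 \<in> {0..1}" using assms by auto
  have W2: "W q (Tupd l0 l1 ?z) \<le> (1-t) * W q (Tupd l0 l1 x) + t * W q (Tupd l0 l1 y)"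
    if "q \<in> {0..1}" for q
    using assms(1) that Tx Ty t unfolding SC_def T_comb by blast
  have W1: "W (Tupd l0 l1 ?z) q \<le> (1-t) * W (Tupd l0 l1 x) q + t * W (Tupd l0 l1 y) q"
    if "q \<in> {0..1}" for q
    using assms(1) that Tx Ty t unfolding SC_def T_comb by blast
  show "VB l0 l1 \<beta> Rl Rh W a ?z p \<le> (1-t) * VB l0 l1 \<beta> Rl Rh W a x p + t * VB l0 l1 \<beta> Rl Rh W a y p"
  proof (cases a)
    case Bb then show ?thesis by (simp add: algebra_simps)
  next
    case B1 then show ?thesis by (simp add: algebra_simps)
  next
    case B2
    have "VB l0 l1 \<beta> Rl Rh W a ?z p \<le> p*Rh + \<beta> * ((1-p)*((1-t) * W (Tupd l0 l1 x) l0 + t * W (Tupd l0 l1 y) l0)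
        + p*((1-t) * W (Tupd l0 l1 x) l1 + t * W (Tupd l0 l1 y) l1))"
      using B2 comb_mono[OF W1[OF l0i] W1[OF l1i] assms(5)] p by auto
    also have "\<dots> = (1-t) * VB l0 l1 \<beta> Rl Rh W a x p + t * VB l0 l1 \<beta> Rl Rh W a y p"
      using B2 by (simp add: algebra_simps)
    finally show ?thesis .
  qed
  show "VB l0 l1 \<beta> Rl Rh W a p ?z \<le> (1-t) * VB l0 l1 \<beta> Rl Rh W a p x + t * VB l0 l1 \<beta> Rl Rh W a p y"
  proof (cases a)
    case Bb then show ?thesis by (simp add: algebra_simps)
  next
    case B2 then show ?thesis by (simp add: algebra_simps)
  next
    case B1
    have "VB l0 l1 \<beta> Rl Rh W a p ?z \<le> p*Rh + \<beta> * ((1-p)*((1-t) * W l0 (Tupd l0 l1 x) + t * W l0 (Tupd l0 l1 y))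
        + p*((1-t) * W l1 (Tupd l0 l1 x) + t * W l1 (Tupd l0 l1 y)))"
      using B1 comb_mono[OF W2[OF l0i] W2[OF l1i] assms(5)] p by auto
    also have "\<dots> = (1-t) * VB l0 l1 \<beta> Rl Rh W a p x + t * VB l0 l1 \<beta> Rl Rh W a p y"
      using B1 by (simp add: algebra_simps)
    finally show ?thesis .
  qed
qed

definition Lop where
  "Lop l0 l1 \<beta> Rl Rh W = (\<lambda>p1 p2. max (VB l0 l1 \<beta> Rl Rh W Bb p1 p2)
       (max (VB l0 l1 \<beta> Rl Rh W B1 p1 p2) (VB l0 l1 \<beta> Rl Rh W B2 p1 p2)))"

lemma max_comb:
  fixes a b c a1 b1 c1 a2 b2 c2 t :: real
  assumes "a \<le> (1-t)*a1 + t*a2" "b \<le> (1-t)*b1 + t*b2" "c \<le> (1-t)*c1 + t*c2" "0 \<le> t" "t \<le> 1"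
  shows "max a (max b c) \<le> (1-t) * max a1 (max b1 c1) + t * max a2 (max b2 c2)"
proof -
  have "(1-t)*a1 \<le> (1-t) * max a1 (max b1 c1)" "(1-t)*b1 \<le> (1-t) * max a1 (max b1 c1)"
       "(1-t)*c1 \<le> (1-t) * max a1 (max b1 c1)"
    using assms by (auto intro!: mult_left_mono)
  moreover have "t*a2 \<le> t * max a2 (max b2 c2)" "t*b2 \<le> t * max a2 (max b2 c2)"
       "t*c2 \<le> t * max a2 (max b2 c2)"
    using assms by (auto intro!: mult_left_mono)
  ultimately show ?thesis using assms(1-3) by linarith
qed

lemma L_SC:
  assumes "SC W" "0 \<le> l0" "l0 \<le> l1" "l1 \<le> 1" "0 \<le> \<beta>"
  shows "SC (Lop l0 l1 \<beta> Rl Rh W)"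
proof -
  have h: "SC (VB l0 l1 \<beta> Rl Rh W a)" for a using VB_SC assms by blast
  show ?thesis unfolding SC_def Lop_def
  proof (intro ballI conjI)
    fix p x y t :: real
    assume p: "p \<in> {0..1}" and x: "x \<in> {0..1}" and y: "y \<in> {0..1}" and t: "t \<in> {0..1}"
    show "max (VB l0 l1 \<beta> Rl Rh W Bb ((1 - t) * x + t * y) p)
         (max (VB l0 l1 \<beta> Rl Rh W B1 ((1 - t) * x + t * y) p) (VB l0 l1 \<beta> Rl Rh W B2 ((1 - t) * x + t * y) p))
        \<le> (1 - t) * max (VB l0 l1 \<beta> Rl Rh W Bb x p) (max (VB l0 l1 \<beta> Rl Rh W B1 x p) (VB l0 l1 \<beta> Rl Rh W B2 x p)) +
           t * max (VB l0 l1 \<beta> Rl Rh W Bb y p) (max (VB l0 l1 \<beta> Rl Rh W B1 y p) (VB l0 l1 \<beta> Rl Rh W B2 y p))"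
      apply (rule max_comb)
      using SC_D1[OF h[of Bb] p x y t] SC_D1[OF h[of B1] p x y t] SC_D1[OF h[of B2] p x y t] t by auto
    show "max (VB l0 l1 \<beta> Rl Rh W Bb p ((1 - t) * x + t * y))
         (max (VB l0 l1 \<beta> Rl Rh W B1 p ((1 - t) * x + t * y)) (VB l0 l1 \<beta> Rl Rh W B2 p ((1 - t) * x + t * y)))
        \<le> (1 - t) * max (VB l0 l1 \<beta> Rl Rh W Bb p x) (max (VB l0 l1 \<beta> Rl Rh W B1 p x) (VB l0 l1 \<beta> Rl Rh W B2 p x)) +
           t * max (VB l0 l1 \<beta> Rl Rh W Bb p y) (max (VB l0 l1 \<beta> Rl Rh W B1 p y) (VB l0 l1 \<beta> Rl Rh W B2 p y))"
      apply (rule max_comb)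
      using SC_D2[OF h[of Bb] p x y t] SC_D2[OF h[of B1] p x y t] SC_D2[OF h[of B2] p x y t] t by auto
  qed
qed

lemma wabs: fixes w d e :: real assumes "\<bar>d\<bar> \<le> e" "0 \<le> w" shows "\<bar>w*d\<bar> \<le> w*e"
  using assms by (simp add: abs_mult mult_left_mono)

lemma avg2: fixes w1 w2 d1 d2 e :: real
  assumes "\<bar>d1\<bar> \<le> e" "\<bar>d2\<bar> \<le> e" "0 \<le> w1" "0 \<le> w2" "w1 + w2 = 1"
  shows "\<bar>w1*d1 + w2*d2\<bar> \<le> e"
proof -
  have "\<bar>w1*d1\<bar> \<le> w1*e" "\<bar>w2*d2\<bar> \<le> w2*e" using assms wabs by auto
  moreover have "w1*e + w2*e = (w1+w2)*e" by (simp add: distrib_right)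
  hence "w1*e + w2*e = e" using assms(5) by simp
  ultimately show ?thesis by linarith
qed

lemma avg4: fixes w1 w2 w3 w4 d1 d2 d3 d4 e :: real
  assumes "\<bar>d1\<bar> \<le> e" "\<bar>d2\<bar> \<le> e" "\<bar>d3\<bar> \<le> e" "\<bar>d4\<bar> \<le> e"
   "0 \<le> w1" "0 \<le> w2" "0 \<le> w3" "0 \<le> w4" "w1 + w2 + w3 + w4 = 1"
  shows "\<bar>w1*d1 + w2*d2 + w3*d3 + w4*d4\<bar> \<le> e"
proof -
  have "\<bar>w1*d1\<bar> \<le> w1*e" "\<bar>w2*d2\<bar> \<le> w2*e" "\<bar>w3*d3\<bar> \<le> w3*e" "\<bar>w4*d4\<bar> \<le> w4*e"
    using assms wabs by auto
  moreover have "w1*e + w2*e + w3*e + w4*e = (w1+w2+w3+w4)*e" by (simp add: distrib_right)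
  hence "w1*e + w2*e + w3*e + w4*e = e" using assms(9) by simp
  ultimately show ?thesis by linarith
qed

lemma VB_contr:
  assumes "\<forall>q1\<in>{0..1}. \<forall>q2\<in>{0..1}. \<bar>W q1 q2 - W' q1 q2\<bar> \<le> e"
    "0 \<le> l0" "l0 \<le> l1" "l1 \<le> 1" "0 \<le> \<beta>" "p1 \<in> {0..1}" "p2 \<in> {0..1}"
  shows "\<bar>VB l0 l1 \<beta> Rl Rh W a p1 p2 - VB l0 l1 \<beta> Rl Rh W' a p1 p2\<bar> \<le> \<beta> * e"
proof -
  have Tp1: "Tupd l0 l1 p1 \<in> {0..1}" and Tp2: "Tupd l0 l1 p2 \<in> {0..1}"
    using T_in assms by auto
  have l0i: "l0 \<in> {0..1}" and l1i: "l1 \<in> {0..1}" using assms by auto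
  show ?thesis
  proof (cases a)
    case Bb
    have w: "0 \<le> (1-p1)*(1-p2)" "0 \<le> p1*(1-p2)" "0 \<le> (1-p1)*p2" "0 \<le> p1*p2"
      using assms(6,7) by auto
    have s: "(1-p1)*(1-p2) + p1*(1-p2) + (1-p1)*p2 + p1*p2 = 1" by (simp add: algebra_simps)
    have "\<bar>(1 - p1) * (1 - p2) * (W l0 l0 - W' l0 l0) + p1 * (1 - p2) * (W l1 l0 - W' l1 l0)
        + (1 - p1) * p2 * (W l0 l1 - W' l0 l1) + p1 * p2 * (W l1 l1 - W' l1 l1)\<bar> \<le> e"
      by (rule avg4[OF _ _ _ _ w s]) (use assms(1) l0i l1i in auto)
    hence "\<bar>\<beta>\<bar> * \<bar>(1 - p1) * (1 - p2) * (W l0 l0 - W' l0 l0) + p1 * (1 - p2) * (W l1 l0 - W' l1 l0)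
        + (1 - p1) * p2 * (W l0 l1 - W' l0 l1) + p1 * p2 * (W l1 l1 - W' l1 l1)\<bar> \<le> \<beta> * e"
      using assms(5) by (simp add: mult_left_mono)
    moreover have "VB l0 l1 \<beta> Rl Rh W a p1 p2 - VB l0 l1 \<beta> Rl Rh W' a p1 p2 = \<beta> * ((1 - p1) * (1 - p2) * (W l0 l0 - W' l0 l0) + p1 * (1 - p2) * (W l1 l0 - W' l1 l0)
        + (1 - p1) * p2 * (W l0 l1 - W' l0 l1) + p1 * p2 * (W l1 l1 - W' l1 l1))"
      using Bb by (simp add: algebra_simps)
    ultimately show ?thesis by (simp only: abs_mult)
  next
    case B1
    have "\<bar>(1 - p1) * (W l0 (Tupd l0 l1 p2) - W' l0 (Tupd l0 l1 p2))
         + p1 * (W l1 (Tupd l0 l1 p2) - W' l1 (Tupd l0 l1 p2))\<bar> \<le> e"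
      apply (rule avg2)
      using assms(1) l0i l1i Tp2 assms(6,7) by auto
    hence "\<bar>\<beta>\<bar> * \<bar>(1 - p1) * (W l0 (Tupd l0 l1 p2) - W' l0 (Tupd l0 l1 p2))
         + p1 * (W l1 (Tupd l0 l1 p2) - W' l1 (Tupd l0 l1 p2))\<bar> \<le> \<beta> * e"
      using assms(5) by (simp add: mult_left_mono)
    moreover have "VB l0 l1 \<beta> Rl Rh W a p1 p2 - VB l0 l1 \<beta> Rl Rh W' a p1 p2 = \<beta> * ((1 - p1) * (W l0 (Tupd l0 l1 p2) - W' l0 (Tupd l0 l1 p2))
         + p1 * (W l1 (Tupd l0 l1 p2) - W' l1 (Tupd l0 l1 p2)))"
      using B1 by (simp add: algebra_simps)
    ultimately show ?thesis by (simp only: abs_mult)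
  next
    case B2
    have "\<bar>(1 - p2) * (W (Tupd l0 l1 p1) l0 - W' (Tupd l0 l1 p1) l0)
         + p2 * (W (Tupd l0 l1 p1) l1 - W' (Tupd l0 l1 p1) l1)\<bar> \<le> e"
      apply (rule avg2)
      using assms(1) l0i l1i Tp1 assms(6,7) by auto
    hence "\<bar>\<beta>\<bar> * \<bar>(1 - p2) * (W (Tupd l0 l1 p1) l0 - W' (Tupd l0 l1 p1) l0)
         + p2 * (W (Tupd l0 l1 p1) l1 - W' (Tupd l0 l1 p1) l1)\<bar> \<le> \<beta> * e"
      using assms(5) by (simp add: mult_left_mono)
    moreover have "VB l0 l1 \<beta> Rl Rh W a p1 p2 - VB l0 l1 \<beta> Rl Rh W' a p1 p2 = \<beta> * ((1 - p2) * (W (Tupd l0 l1 p1) l0 - W' (Tupd l0 l1 p1) l0)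
         + p2 * (W (Tupd l0 l1 p1) l1 - W' (Tupd l0 l1 p1) l1))"
      using B2 by (simp add: algebra_simps)
    ultimately show ?thesis by (simp only: abs_mult)
  qed
qed

lemma max3_abs: fixes a b c a' b' c' e :: real
  assumes "\<bar>a - a'\<bar> \<le> e" "\<bar>b - b'\<bar> \<le> e" "\<bar>c - c'\<bar> \<le> e"
  shows "\<bar>max a (max b c) - max a' (max b' c')\<bar> \<le> e"
  using assms unfolding abs_le_iff max_def by (simp split: if_splits)

lemma L_contr:
  assumes "\<forall>q1\<in>{0..1}. \<forall>q2\<in>{0..1}. \<bar>W q1 q2 - W' q1 q2\<bar> \<le> e"
    "0 \<le> l0" "l0 \<le> l1" "l1 \<le> 1" "0 \<le> \<beta>"
  shows "\<forall>p1\<in>{0..1}. \<forall>p2\<in>{0..1}. \<bar>Lop l0 l1 \<beta> Rl Rh W p1 p2 - Lop l0 l1 \<beta> Rl Rh W' p1 p2\<bar> \<le> \<beta> * e"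
  unfolding Lop_def
proof (intro ballI max3_abs)
  fix p1 p2 :: real assume "p1 \<in> {0..1}" "p2 \<in> {0..1}"
  then show "\<bar>VB l0 l1 \<beta> Rl Rh W Bb p1 p2 - VB l0 l1 \<beta> Rl Rh W' Bb p1 p2\<bar> \<le> \<beta> * e"
    "\<bar>VB l0 l1 \<beta> Rl Rh W B1 p1 p2 - VB l0 l1 \<beta> Rl Rh W' B1 p1 p2\<bar> \<le> \<beta> * e"
    "\<bar>VB l0 l1 \<beta> Rl Rh W B2 p1 p2 - VB l0 l1 \<beta> Rl Rh W' B2 p1 p2\<bar> \<le> \<beta> * e"
    using VB_contr[OF assms] by blast+
qed

theorem lemma2:
  fixes l0 l1 \<beta> Rl Rh :: real and V :: "real \<Rightarrow> real \<Rightarrow> real"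
  assumes "0 \<le> l0" and "l0 \<le> l1" and "l1 \<le> 1"
    and "0 \<le> \<beta>" and "\<beta> < 1"
    and "0 < Rl" and "Rl < Rh" and "Rh < 2 * Rl"
    and "is_optimal_value l0 l1 \<beta> Rl Rh V"
  shows "\<forall>a. (\<forall>p2\<in>{0..1}. convex_on {0..1} (\<lambda>p1. VB l0 l1 \<beta> Rl Rh V a p1 p2)) \<and>
             (\<forall>p1\<in>{0..1}. convex_on {0..1} (\<lambda>p2. VB l0 l1 \<beta> Rl Rh V a p1 p2))"
proof -
  let ?L = "Lop l0 l1 \<beta> Rl Rh"
  define Wn where "Wn n = (?L ^^ n) (\<lambda>_ _. 0)" for n
  obtain M where M: "\<forall>p1\<in>{0..1}. \<forall>p2\<in>{0..1}. \<bar>V p1 p2\<bar> \<le> M"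
    using assms(9) unfolding is_optimal_value_def by blast
  have fixV: "\<forall>p1\<in>{0..1}. \<forall>p2\<in>{0..1}. V p1 p2 = ?L V p1 p2"
    using assms(9) unfolding is_optimal_value_def Lop_def by blast
  have err: "\<forall>p1\<in>{0..1}. \<forall>p2\<in>{0..1}. \<bar>V p1 p2 - Wn n p1 p2\<bar> \<le> \<beta>^n * M" for n
  proof (induction n)
    case 0 then show ?case using M by (simp add: Wn_def)
  next
    case (Suc n)
    have "\<forall>p1\<in>{0..1}. \<forall>p2\<in>{0..1}. \<bar>?L V p1 p2 - ?L (Wn n) p1 p2\<bar> \<le> \<beta> * (\<beta>^n * M)"
      by (rule L_contr[OF Suc assms(1-4)])
    then show ?case using fixV by (simp add: Wn_def mult.assoc)
  qed
  have scW: "SC (Wn n)" for n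
  proof (induction n)
    case 0 then show ?case by (simp add: Wn_def SC_def)
  next
    case (Suc n) then show ?case using L_SC[OF Suc assms(1-4)] by (simp add: Wn_def)
  qed
  have lim: "A \<le> B" if "\<And>n. A \<le> B + 2 * (\<beta>^n * M)" for A B :: real
  proof -
    have "(\<lambda>n. B + 2 * (\<beta>^n * M)) \<longlonglongrightarrow> B + 2 * (0 * M)"
      by (intro tendsto_intros LIMSEQ_power_zero) (use assms(4,5) in auto)
    have "A \<le> B + 2 * (0 * M)"
      by (rule LIMSEQ_le_const[OF \<open>_ \<longlonglongrightarrow> _\<close>]) (use that in blast)
    then show ?thesis by simp
  qed
  have scV: "SC V" unfolding SC_def
  proof (intro ballI conjI)
    fix p x y t :: real
    assume p: "p \<in> {0..1}" and x: "x \<in> {0..1}" and y: "y \<in> {0..1}" and t: "t \<in> {0..1}"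
    have z: "(1-t)*x+t*y \<in> {0..1}"
      using convexD[OF convex_real_interval(5)[of 0 1], of x y "1-t" t] x y t by auto
    show "V ((1-t)*x+t*y) p \<le> (1-t) * V x p + t * V y p"
    proof (rule lim)
      fix n
      have a: "\<bar>V ((1-t)*x+t*y) p - Wn n ((1-t)*x+t*y) p\<bar> \<le> \<beta>^n * M"
        "\<bar>V x p - Wn n x p\<bar> \<le> \<beta>^n * M" "\<bar>V y p - Wn n y p\<bar> \<le> \<beta>^n * M"
        using err z p x y by auto
      have b: "Wn n ((1-t)*x+t*y) p \<le> (1-t) * Wn n x p + t * Wn n y p"
        using scW[of n] p x y t unfolding SC_def by blast
      have "(1-t) * Wn n x p \<le> (1-t) * (V x p + \<beta>^n * M)" "t * Wn n y p \<le> t * (V y p + \<beta>^n * M)"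
        using a t by (auto intro!: mult_left_mono)
      then show "V ((1-t)*x+t*y) p \<le> (1-t) * V x p + t * V y p + 2 * (\<beta>^n * M)"
        using absD[OF a(1)] b \<open>(1-t) * _ \<le> _\<close> \<open>t * _ \<le> _\<close> by (simp add: algebra_simps)
    qed
    show "V p ((1-t)*x+t*y) \<le> (1-t) * V p x + t * V p y"
    proof (rule lim)
      fix n
      have a: "\<bar>V p ((1-t)*x+t*y) - Wn n p ((1-t)*x+t*y)\<bar> \<le> \<beta>^n * M"
        "\<bar>V p x - Wn n p x\<bar> \<le> \<beta>^n * M" "\<bar>V p y - Wn n p y\<bar> \<le> \<beta>^n * M"
        using err z p x y by auto
      have b: "Wn n p ((1-t)*x+t*y) \<le> (1-t) * Wn n p x + t * Wn n p y"
        using scW[of n] p x y t unfolding SC_def by blast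
      have "(1-t) * Wn n p x \<le> (1-t) * (V p x + \<beta>^n * M)" "t * Wn n p y \<le> t * (V p y + \<beta>^n * M)"
        using a t by (auto intro!: mult_left_mono)
      then show "V p ((1-t)*x+t*y) \<le> (1-t) * V p x + t * V p y + 2 * (\<beta>^n * M)"
        using absD[OF a(1)] b \<open>(1-t) * _ \<le> _\<close> \<open>t * _ \<le> _\<close> by (simp add: algebra_simps)
    qed
  qed
  show ?thesis
  proof (intro allI conjI ballI)
    fix a and q :: real assume q: "q \<in> {0..1}"
    have S: "SC (VB l0 l1 \<beta> Rl Rh V a)" using VB_SC[OF scV assms(1-4)] .
    show "convex_on {0..1} (\<lambda>p1. VB l0 l1 \<beta> Rl Rh V a p1 q)"
      by (rule convex_onI) (use SC_D1[OF S q] SC_D2[OF S q] in auto)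
    show "convex_on {0..1} (\<lambda>p2. VB l0 l1 \<beta> Rl Rh V a q p2)"
      by (rule convex_onI) (use SC_D1[OF S q] SC_D2[OF S q] in auto)
  qed
qed

end
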